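(* Assume (A1)–(A3), $P^\star\in\Pi_{K^\star}\setminus\Pi_{K^\star-1}$ with $K^\star<\infty$, that for every $\theta\in\Theta_\infty$, $H(P_\theta|P^\star)<\infty$ and $p_\theta\ell_\theta\in L^1(\mu)$, that $\{\ell_\theta:\theta\in\Theta_\infty\}\subset\mathcal L_\tau(P^\star)$, and that for every $K$, $P^\star\notin\Pi_K$ implies $H(P^\star|\Pi_{K+1})<H(P^\star|\Pi_K)$. Then for every $K<K^\star$, $\Pi_K\subset\Lambda_{0,K}\cap\Gamma_{0,K}$ and $P^\star\notin\Lambda_{0,K}\cup\Gamma_{0,K}$.
   Context: $(\mathcal Z,\mathcal F)$ is Polish with $\sigma$-finite $\mu$; $P^\star\ll\mu$ is a probability on $\mathcal Z$ with $\ell^\star=\log(dP^\star/d\mu)$. $\{(\Theta_K,d)\}$ is a nested sequence of metric spaces, $\Theta_\infty=\bigcup_K\Theta_K$; $P_\theta$ has density $p_\theta$ w.r.t. $\mu$, $\ell_\theta=\log p_\theta$, $\Pi_K=\{P_\theta:\theta\in\Theta_K\}$, $\Pi_0=\emptyset$, $K^\star=\min\{K:P^\star\in\Pi_K\}$. $H(P|Q)=\int\log(dP/dQ)\,dP$ if $P\ll Q$, $+\infty$ otherwise; $H(P|\Pi)=\inf_{Q\in\Pi}H(P|Q)$. (A1) each $(\Theta_K,d)$ compact and each $\Pi_K$ weakly compact; (A2) $\theta\mapsto\ell_\theta(z)$ continuous on each $\Theta_K$; (A3) there are $l,u$ with $u-l\in L^1(P^\star)$, $l\le\ell^\star\le u$,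 $l\le\ell_\theta\le u$ for all $\theta\in\Theta_\infty$. $\tau(s)=e^{|s|}-|s|-1$; $\mathcal L_\tau(P^\star)=\{f:\exists a>0,\ P^\star\tau(f/a)<\infty\}$, a Banach space for $\|f\|_\tau=\inf\{a>0:P^\star\tau(f/a)\le1\}$, with topological dual $\mathcal L'_\tau(P^\star)$ (each $P_\theta$, $\theta\in\Theta_{K^\star-1}$, is regarded as the element $f\mapsto\int f\,dP_\theta$). $\mathcal P=\{p^{-1}\sum_{i=1}^p\delta_{z_i}:p\ge1,z_i\in\mathcal Z\}$. $\mathcal Q=\{Q\in\mathcal L'_\tau(P^\star):Q\ge0,\ Q1=1\}\cup\mathcal P$. For $\alpha\ge0$, $K\ge1$: $\Lambda_{\alpha,K}=\{Q\in\mathcal Q:\sup_{\theta\in\Theta_K}Q\ell_\theta-\sup_{\theta\in\Theta_{K+1}}Q\ell_\theta\ge-\alpha\}$, $\Gamma_{\alpha,K}=\{Q\in\mathcal Q:\sup_{\theta\in\Theta_K}Q\ell_\theta-\sup_{\theta\in\Theta_{K^\star}}Q\ell_\theta\ge-\alpha\}$. *)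

theory Defs
  imports "HOL-Probability.Probability"
begin

text \<open>For P << Q it is the integral of log(dP/dQ) w.r.t. P,
understood as (positive part) - (negative part).\<close>
definition rel_entropy :: "'a measure \<Rightarrow> 'a measure \<Rightarrow> ereal" where
  "rel_entropy P Q =
     (if sets P = sets Q \<and> absolutely_continuous Q P then
        enn2ereal (\<integral>\<^sup>+ x. ennreal (ln (enn2real (RN_deriv Q P x))) \<partial>P)
        - enn2ereal (\<integral>\<^sup>+ x. ennreal (- ln (enn2real (RN_deriv Q P x))) \<partial>P)
      else \<infinity>)"

text \<open>H(P|Ms) = inf over Q in Ms of H(P|Q) (= +oo for empty Ms).\<close>
definition rel_entropy_set :: "'a measure \<Rightarrow> 'a measure set \<Rightarrow> ereal" where
  "rel_entropy_set P Ms = (INF Q\<in>Ms. rel_entropy P Q)"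

definition model :: "'a measure \<Rightarrow> ('t \<Rightarrow> 'a \<Rightarrow> real) \<Rightarrow> 't \<Rightarrow> 'a measure" where
  "model \<mu> ell \<theta> = density \<mu> (\<lambda>z. ennreal (exp (ell \<theta> z)))"

definition model_class :: "'a measure \<Rightarrow> ('t \<Rightarrow> 'a \<Rightarrow> real) \<Rightarrow> 't set \<Rightarrow> 'a measure set" where
  "model_class \<mu> ell \<Theta> = model \<mu> ell ` \<Theta>"

definition weak_conv :: "(nat \<Rightarrow> 'a::topological_space measure) \<Rightarrow> 'a measure \<Rightarrow> bool" where
  "weak_conv Ps P \<longleftrightarrow> (\<forall>f. continuous_on UNIV f \<and> bounded (range f) \<longrightarrow>
       (\<lambda>n. \<integral>z. (f z::real) \<partial>(Ps n)) \<longlonglongrightarrow> (\<integral>z. f z \<partial>P))"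

text \<open>Weak compactness of a set of probability measures on a Polish space (the weak topology
is metrizable there, so this is sequential compactness).\<close>
definition weakly_compact :: "'a::topological_space measure set \<Rightarrow> bool" where
  "weakly_compact Ms \<longleftrightarrow> (\<forall>Ps. (\<forall>n. Ps n \<in> Ms) \<longrightarrow>
       (\<exists>(r::nat \<Rightarrow> nat) P. strict_mono r \<and> P \<in> Ms \<and> weak_conv (Ps \<circ> r) P))"

definition tau :: "real \<Rightarrow> real" where
  "tau s = exp \<bar>s\<bar> - \<bar>s\<bar> - 1"

definition orlicz :: "'a measure \<Rightarrow> ('a \<Rightarrow> real) set" where
  "orlicz P = {f. f \<in> borel_measurable P \<and>
      (\<exists>a>0. (\<integral>\<^sup>+ z. ennreal (tau (f z / a)) \<partial>P) < \<infinity>)}"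

definition orlicz_norm :: "'a measure \<Rightarrow> ('a \<Rightarrow> real) \<Rightarrow> real" where
  "orlicz_norm P f = Inf {a. a > 0 \<and> (\<integral>\<^sup>+ z. ennreal (tau (f z / a)) \<partial>P) \<le> 1}"

text \<open>Two functionals agreeing on L_tau(P) are the same element;
values outside L_tau(P) are irrelevant.\<close>
definition orlicz_dual :: "'a measure \<Rightarrow> (('a \<Rightarrow> real) \<Rightarrow> real) set" where
  "orlicz_dual P = {Q.
      (\<forall>f\<in>orlicz P. \<forall>g\<in>orlicz P. \<forall>a b. Q (\<lambda>z. a * f z + b * g z) = a * Q f + b * Q g) \<and>
      (\<exists>C. \<forall>f\<in>orlicz P. \<bar>Q f\<bar> \<le> C * orlicz_norm P f)}"

text \<open>Empirical measures p^{-1} sum delta_{z_i}, viewed as functionals.\<close>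
definition empirical :: "(('a \<Rightarrow> real) \<Rightarrow> real) set" where
  "empirical = {Q. \<exists>(p::nat) zs. p \<ge> 1 \<and> Q = (\<lambda>f. (\<Sum>i<p. f (zs i)) / real p)}"

definition Qset :: "'a measure \<Rightarrow> (('a \<Rightarrow> real) \<Rightarrow> real) set" where
  "Qset P = {Q \<in> orlicz_dual P.
               (\<forall>f\<in>orlicz P. (AE z in P. f z \<ge> 0) \<longrightarrow> Q f \<ge> 0) \<and> Q (\<lambda>_. 1) = 1}
            \<union> empirical"

definition int_fun :: "'a measure \<Rightarrow> ('a \<Rightarrow> real) \<Rightarrow> real" where
  "int_fun P = (\<lambda>f. \<integral>z. f z \<partial>P)"

definition sup_ll :: "(('a \<Rightarrow> real) \<Rightarrow> real) \<Rightarrow> ('t \<Rightarrow> 'a \<Rightarrow> real) \<Rightarrow> 't set \<Rightarrow> ereal" where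
  "sup_ll Q ell \<Theta> = (SUP \<theta>\<in>\<Theta>. ereal (Q (ell \<theta>)))"

text \<open>Lambda_{alpha,K} and Gamma_{alpha,K}.  The condition
  sup_{Theta_K} Q ell - sup_{Theta_{K'}} Q ell >= -alpha  is written
  sup_{Theta_{K'}} Q ell <= sup_{Theta_K} Q ell + alpha  (extended reals).\<close>
definition Lambda_set :: "'a measure \<Rightarrow> (nat \<Rightarrow> 't set) \<Rightarrow> ('t \<Rightarrow> 'a \<Rightarrow> real) \<Rightarrow> real \<Rightarrow> nat
     \<Rightarrow> (('a \<Rightarrow> real) \<Rightarrow> real) set" where
  "Lambda_set P \<Theta> ell \<alpha> K =
     {Q \<in> Qset P. sup_ll Q ell (\<Theta> (Suc K)) \<le> sup_ll Q ell (\<Theta> K) + ereal \<alpha>}"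

definition Gamma_set :: "'a measure \<Rightarrow> (nat \<Rightarrow> 't set) \<Rightarrow> ('t \<Rightarrow> 'a \<Rightarrow> real) \<Rightarrow> nat \<Rightarrow> real \<Rightarrow> nat
     \<Rightarrow> (('a \<Rightarrow> real) \<Rightarrow> real) set" where
  "Gamma_set P \<Theta> ell Ks \<alpha> K =
     {Q \<in> Qset P. sup_ll Q ell (\<Theta> Ks) \<le> sup_ll Q ell (\<Theta> K) + ereal \<alpha>}"

end

theory Submission
  imports Defs
begin

lemma young_exp:
  fixes x t :: real assumes "0 \<le> x"
  shows "x * exp t \<le> exp x + exp t * max 0 t"
proof -
  have "1 + (x - t) \<le> exp (x - t)" by (rule exp_ge_add_one_self)
  hence "exp t * (1 + (x - t)) \<le> exp t * exp (x - t)" by (intro mult_left_mono) auto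
  also have "exp t * exp (x - t) = exp x" by (simp add: exp_add[symmetric])
  finally have "exp t + exp t * x - exp t * t \<le> exp x" by (simp add: algebra_simps)
  moreover have "exp t * t \<le> exp t * max 0 t" by (intro mult_left_mono) auto
  ultimately show ?thesis by (smt (verit) exp_gt_zero mult.commute)
qed

lemma tau_nonneg: "0 \<le> tau s"
  unfolding tau_def using exp_ge_add_one_self[of "\<bar>s\<bar>"] by linarith

lemma exp_abs_le_tau: "exp \<bar>s\<bar> \<le> 2 * tau s + 2"
proof -
  have "1 + (\<bar>s\<bar> - 1) \<le> exp (\<bar>s\<bar> - 1)" by (rule exp_ge_add_one_self)
  hence "exp 1 * \<bar>s\<bar> \<le> exp 1 * exp (\<bar>s\<bar> - 1)" by (intro mult_left_mono) auto
  also have "\<dots> = exp \<bar>s\<bar>" by (simp add: exp_add[symmetric])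
  finally have "exp 1 * \<bar>s\<bar> \<le> exp \<bar>s\<bar>" .
  moreover have "2 \<le> exp (1::real)" using exp_ge_add_one_self[of 1] by simp
  ultimately have "2 * \<bar>s\<bar> \<le> exp \<bar>s\<bar>"
    by (meson abs_ge_zero mult_right_mono order_trans)
  thus ?thesis unfolding tau_def by simp
qed

lemma tau_scale: assumes "0 \<le> c" "c \<le> 1" shows "tau (c * s) \<le> c * tau s"
proof -
  have "exp ((1 - c) * 0 + c * \<bar>s\<bar>) \<le> (1 - c) * exp 0 + c * exp \<bar>s\<bar>"
    using convex_onD[OF exp_convex, of c 0 "\<bar>s\<bar>"] assms by simp
  thus ?thesis unfolding tau_def using assms by (simp add: abs_mult algebra_simps)
qed

lemma t_exp_le: fixes t :: real assumes "0 \<le> t" shows "t * exp (- t) \<le> 1"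
proof -
  have "t \<le> exp t" using exp_ge_add_one_self[of t] by linarith
  hence "t * exp (-t) \<le> exp t * exp (-t)" by (intro mult_right_mono) auto
  thus ?thesis by (simp add: exp_add[symmetric])
qed

lemma tau_integrable:
  assumes f: "f \<in> borel_measurable M" and fin: "(\<integral>\<^sup>+ z. ennreal (tau (f z / a)) \<partial>M) < \<infinity>"
  shows "integrable M (\<lambda>z. tau (f z / a))"
proof (rule integrableI_bounded)
  show "(\<lambda>z. tau (f z / a)) \<in> borel_measurable M" using f unfolding tau_def by measurable
  show "(\<integral>\<^sup>+ z. ennreal (norm (tau (f z / a))) \<partial>M) < \<infinity>" using fin by (simp add: tau_nonneg)
qed

lemma pointwise_bound:
  fixes g fz a :: real assumes "0 < g" "0 < a"
  shows "\<bar>g * fz\<bar> \<le> a * (2 * tau (fz / a) + 2 + g * max 0 (ln g))"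
proof -
  have "(\<bar>fz\<bar> / a) * exp (ln g) \<le> exp (\<bar>fz\<bar> / a) + exp (ln g) * max 0 (ln g)"
    using assms by (intro young_exp) auto
  hence "(\<bar>fz\<bar> / a) * g \<le> exp \<bar>fz / a\<bar> + g * max 0 (ln g)" using assms by simp
  also have "exp \<bar>fz / a\<bar> \<le> 2 * tau (fz / a) + 2" by (rule exp_abs_le_tau)
  finally have "(\<bar>fz\<bar> / a) * g \<le> 2 * tau (fz / a) + 2 + g * max 0 (ln g)" by simp
  hence "a * ((\<bar>fz\<bar> / a) * g) \<le> a * (2 * tau (fz / a) + 2 + g * max 0 (ln g))"
    using assms by (intro mult_left_mono) auto
  thus ?thesis using assms by (simp add: abs_mult mult.commute)
qed

lemma orlicz_dual_bound:
  assumes M: "prob_space M" and gm: "g \<in> borel_measurable M" and gpos: "\<And>z. 0 < g z"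
    and Eint: "integrable M (\<lambda>z. g z * max 0 (ln (g z)))"
    and f: "f \<in> orlicz M"
  shows "integrable M (\<lambda>z. g z * f z)"
    and "\<bar>\<integral>z. g z * f z \<partial>M\<bar> \<le> (4 + (\<integral>z. g z * max 0 (ln (g z)) \<partial>M)) * orlicz_norm M f"
proof -
  interpret prob_space M by fact
  define E where "E = (\<integral>z. g z * max 0 (ln (g z)) \<partial>M)"
  have E0: "0 \<le> E" unfolding E_def using gpos by (intro Bochner_Integration.integral_nonneg) (simp add: less_imp_le)
  have fm: "f \<in> borel_measurable M" using f unfolding orlicz_def by auto
  obtain a0 where a0: "a0 > 0" "(\<integral>\<^sup>+ z. ennreal (tau (f z / a0)) \<partial>M) < \<infinity>"
    using f unfolding orlicz_def by auto
  have gen: "integrable M (\<lambda>z. g z * f z) \<and>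
      \<bar>\<integral>z. g z * f z \<partial>M\<bar> \<le> a * (2 * (\<integral>z. tau (f z / a) \<partial>M) + 2 + E)"
    if a: "a > 0" "(\<integral>\<^sup>+ z. ennreal (tau (f z / a)) \<partial>M) < \<infinity>" for a
  proof -
    have ti: "integrable M (\<lambda>z. tau (f z / a))" using tau_integrable[OF fm a(2)] .
    have bi: "integrable M (\<lambda>z. a * (2 * tau (f z / a) + 2 + g z * max 0 (ln (g z))))"
      using ti Eint by (intro integrable_mult_right integrable_add integrable_const) auto
    have pb: "\<bar>g z * f z\<bar> \<le> a * (2 * tau (f z / a) + 2 + g z * max 0 (ln (g z)))" for z
      using pointwise_bound[OF gpos a(1)] .
    have int: "integrable M (\<lambda>z. g z * f z)"
    proof (rule Bochner_Integration.integrable_bound[OF bi])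
      show "(\<lambda>z. g z * f z) \<in> borel_measurable M" using gm fm by measurable
      show "AE z in M. norm (g z * f z) \<le> norm (a * (2 * tau (f z / a) + 2 + g z * max 0 (ln (g z))))"
        using pb by (intro AE_I2) (metis abs_ge_self order_trans real_norm_def)
    qed
    have "\<bar>\<integral>z. g z * f z \<partial>M\<bar> \<le> (\<integral>z. a * (2 * tau (f z / a) + 2 + g z * max 0 (ln (g z))) \<partial>M)"
      by (smt (verit, best) int bi pb integrable_norm integral_mono integral_norm_bound real_norm_def)
    also have "\<dots> = a * (2 * (\<integral>z. tau (f z / a) \<partial>M) + 2 + E)"
      using ti Eint unfolding E_def by (simp add: integral_add prob_space)
    finally show ?thesis using int by simp
  qed
  show "integrable M (\<lambda>z. g z * f z)" using gen[OF a0] by simp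
  define S where "S = {a. a > 0 \<and> (\<integral>\<^sup>+ z. ennreal (tau (f z / a)) \<partial>M) \<le> 1}"
  have normS: "orlicz_norm M f = Inf S" unfolding orlicz_norm_def S_def by simp
  obtain m where m: "(\<integral>\<^sup>+ z. ennreal (tau (f z / a0)) \<partial>M) = ennreal m" "0 \<le> m"
    using a0(2) by (cases "(\<integral>\<^sup>+ z. ennreal (tau (f z / a0)) \<partial>M)" rule: ennreal_cases) auto
  define c where "c = max 1 m"
  have c1: "1 \<le> c" unfolding c_def by simp
  have "a0 * c \<in> S"
  proof -
    have "(\<integral>\<^sup>+ z. ennreal (tau (f z / (a0 * c))) \<partial>M) \<le> (\<integral>\<^sup>+ z. ennreal (1 / c) * ennreal (tau (f z / a0)) \<partial>M)"
    proof (rule nn_integral_mono)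
      fix z
      have "tau ((1 / c) * (f z / a0)) \<le> (1 / c) * tau (f z / a0)"
        using c1 by (intro tau_scale) auto
      hence "tau (f z / (a0 * c)) \<le> (1 / c) * tau (f z / a0)" by (simp add: field_simps)
      thus "ennreal (tau (f z / (a0 * c))) \<le> ennreal (1 / c) * ennreal (tau (f z / a0))"
        using c1 by (simp add: ennreal_mult''[symmetric] tau_nonneg)
    qed
    also have "\<dots> = ennreal (1 / c) * ennreal m"
      using fm m(1) unfolding tau_def by (subst nn_integral_cmult) auto
    also have "\<dots> = ennreal (m / c)" using c1 m(2) by (simp add: ennreal_mult''[symmetric])
    also have "\<dots> \<le> 1" using c1 m(2) unfolding c_def by (auto simp: field_simps)
    finally show ?thesis unfolding S_def using a0(1) c1 by simp
  qed
  hence Sne: "S \<noteq> {}" by auto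
  define C where "C = 4 + E"
  have Cpos: "0 < C" unfolding C_def using E0 by simp
  have "\<bar>\<integral>z. g z * f z \<partial>M\<bar> / C \<le> Inf S"
  proof (rule cInf_greatest[OF Sne])
    fix a assume "a \<in> S"
    hence a: "a > 0" "(\<integral>\<^sup>+ z. ennreal (tau (f z / a)) \<partial>M) \<le> 1" unfolding S_def by auto
    have fin: "(\<integral>\<^sup>+ z. ennreal (tau (f z / a)) \<partial>M) < \<infinity>" 
      using le_less_trans[OF a(2) ennreal_one_less_top] by simp
    have ti: "integrable M (\<lambda>z. tau (f z / a))" using tau_integrable[OF fm fin] .
    have "ennreal (\<integral>z. tau (f z / a) \<partial>M) \<le> 1"
      using a(2) ti by (subst nn_integral_eq_integral[symmetric]) (auto simp: tau_nonneg)
    hence t1: "(\<integral>z. tau (f z / a) \<partial>M) \<le> 1" by (simp add: ennreal_le_1)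
    have "\<bar>\<integral>z. g z * f z \<partial>M\<bar> \<le> a * (2 * (\<integral>z. tau (f z / a) \<partial>M) + 2 + E)"
      using gen[OF a(1) fin] by simp
    also have "\<dots> \<le> a * C" unfolding C_def using a(1) t1 by (intro mult_left_mono) auto
    finally show "\<bar>\<integral>z. g z * f z \<partial>M\<bar> / C \<le> a" using Cpos by (simp add: field_simps)
  qed
  thus "\<bar>\<integral>z. g z * f z \<partial>M\<bar> \<le> (4 + (\<integral>z. g z * max 0 (ln (g z)) \<partial>M)) * orlicz_norm M f"
    using Cpos normS unfolding C_def E_def by (simp add: field_simps)
qed

lemma ennreal_mult_max: fixes g t :: real assumes "0 \<le> g"
  shows "ennreal g * ennreal t = ennreal (g * max 0 t)"
proof (cases "0 \<le> t")
  case True thus ?thesis using assms by (simp add: ennreal_mult)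
next
  case False thus ?thesis by (simp add: ennreal_neg)
qed

lemma rel_entropy_density:
  assumes gm: "g \<in> borel_measurable M" and gpos: "\<And>z. 0 < g z"
    and N: "N = density M (\<lambda>z. ennreal (g z))" and Np: "prob_space N"
  shows "rel_entropy N M = enn2ereal (\<integral>\<^sup>+ z. ennreal (ln (g z)) \<partial>N)
                            - enn2ereal (\<integral>\<^sup>+ z. ennreal (- ln (g z)) \<partial>N)"
proof -
  have sets: "sets N = sets M" using N by simp
  have ac: "absolutely_continuous M N" unfolding N using gm
    by (intro absolutely_continuousI_density) measurable
  have "AE z in M. ennreal (g z) = RN_deriv M N z"
    by (rule RN_deriv_unique_sigma_finite) (use gm N Np prob_space_imp_sigma_finite in auto)
  hence "AE z in N. enn2real (RN_deriv M N z) = g z"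
    unfolding N using gm gpos
    by (subst AE_density) (auto elim!: eventually_mono simp: less_imp_le)
  hence "AE z in N. ln (enn2real (RN_deriv M N z)) = ln (g z)" by (auto elim!: eventually_mono)
  hence e1: "(\<integral>\<^sup>+ z. ennreal (ln (enn2real (RN_deriv M N z))) \<partial>N) = (\<integral>\<^sup>+ z. ennreal (ln (g z)) \<partial>N)"
    and e2: "(\<integral>\<^sup>+ z. ennreal (- ln (enn2real (RN_deriv M N z))) \<partial>N) = (\<integral>\<^sup>+ z. ennreal (- ln (g z)) \<partial>N)"
    by (auto intro!: nn_integral_cong_AE elim!: eventually_mono)
  show ?thesis unfolding rel_entropy_def using sets ac e1 e2 by simp
qed

lemma entropy_pos_integrable:
  assumes M: "prob_space M" and gm: "g \<in> borel_measurable M" and gpos: "\<And>z. 0 < g z"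
    and N: "N = density M (\<lambda>z. ennreal (g z))" and Np: "prob_space N"
    and fin: "rel_entropy N M < \<infinity>"
  shows "integrable M (\<lambda>z. g z * max 0 (ln (g z)))"
proof -
  interpret prob_space M by fact
  have eqA: "(\<integral>\<^sup>+ z. ennreal (ln (g z)) \<partial>N) = (\<integral>\<^sup>+ z. ennreal (g z * max 0 (ln (g z))) \<partial>M)"
    unfolding N using gm gpos
    by (subst nn_integral_density) (auto simp: ennreal_mult_max less_imp_le)
  have eqB: "(\<integral>\<^sup>+ z. ennreal (- ln (g z)) \<partial>N) = (\<integral>\<^sup>+ z. ennreal (g z * max 0 (- ln (g z))) \<partial>M)"
    unfolding N using gm gpos
    by (subst nn_integral_density) (auto simp: ennreal_mult_max less_imp_le)
  have pw: "g z * max 0 (- ln (g z)) \<le> 1" for z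
  proof (cases "0 \<le> ln (g z)")
    case True thus ?thesis by simp
  next
    case False
    hence "g z * max 0 (- ln (g z)) = (- ln (g z)) * exp (- (- ln (g z)))" using gpos[of z] by simp
    also have "\<dots> \<le> 1" using False by (intro t_exp_le) simp
    finally show ?thesis .
  qed
  have "(\<integral>\<^sup>+ z. ennreal (g z * max 0 (- ln (g z))) \<partial>M) \<le> (\<integral>\<^sup>+ z. 1 \<partial>M)"
    using pw by (intro nn_integral_mono) simp
  also have "\<dots> = 1" by (simp add: emeasure_space_1)
  finally have Ble: "(\<integral>\<^sup>+ z. ennreal (- ln (g z)) \<partial>N) \<le> 1" using eqB by simp
  then obtain b where b: "(\<integral>\<^sup>+ z. ennreal (- ln (g z)) \<partial>N) = ennreal b" "0 \<le> b"
    by (cases "(\<integral>\<^sup>+ z. ennreal (- ln (g z)) \<partial>N)" rule: ennreal_cases) (auto simp: top_unique)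
  have Afin: "(\<integral>\<^sup>+ z. ennreal (ln (g z)) \<partial>N) \<noteq> \<infinity>"
  proof
    assume "(\<integral>\<^sup>+ z. ennreal (ln (g z)) \<partial>N) = \<infinity>"
    hence "rel_entropy N M = \<infinity>" using rel_entropy_density[OF gm gpos N Np] b by simp
    thus False using fin by simp
  qed
  then obtain a where a: "(\<integral>\<^sup>+ z. ennreal (g z * max 0 (ln (g z))) \<partial>M) = ennreal a"
    using eqA by (cases "(\<integral>\<^sup>+ z. ennreal (ln (g z)) \<partial>N)" rule: ennreal_cases) (metis, simp)
  show ?thesis
    by (rule integrableI_nn_integral_finite[OF _ _ a]) (use gm gpos in \<open>auto simp: less_imp_le\<close>)
qed

lemma rel_entropy_density_int:
  assumes gm: "g \<in> borel_measurable M" and gpos: "\<And>z. 0 < g z"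
    and N: "N = density M (\<lambda>z. ennreal (g z))" and Np: "prob_space N"
    and int: "integrable N (\<lambda>z. ln (g z))"
  shows "rel_entropy N M = ereal (\<integral>z. ln (g z) \<partial>N)"
proof -
  obtain r q where "0 \<le> r" "0 \<le> q"
    "(\<integral>\<^sup>+x. ennreal (ln (g x))\<partial>N) = ennreal r"
    "(\<integral>\<^sup>+x. ennreal (- ln (g x))\<partial>N) = ennreal q"
    "(\<integral>z. ln (g z) \<partial>N) = r - q"
    using integrableE[OF int] by metis
  thus ?thesis using rel_entropy_density[OF gm gpos N Np] by simp
qed

theorem lemmaC2:
  fixes \<mu> :: "'z::polish_space measure"
    and \<Theta> :: "nat \<Rightarrow> 't::metric_space set"
    and ell :: "'t \<Rightarrow> 'z \<Rightarrow> real"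
    and ellstar l u :: "'z \<Rightarrow> real"
    and Pstar :: "'z measure"
    and Ks :: nat
  assumes sets_mu: "sets \<mu> = sets borel"
    and sigma_fin: "sigma_finite_measure \<mu>"
    and ellstar_meas: "ellstar \<in> borel_measurable \<mu>"
    and Pstar_def: "Pstar = density \<mu> (\<lambda>z. ennreal (exp (ellstar z)))"
    and Pstar_prob: "prob_space Pstar"
    and Theta0: "\<Theta> 0 = {}"
    and nested: "\<And>K. \<Theta> K \<subseteq> \<Theta> (Suc K)"
    and ell_meas: "\<And>\<theta>. \<theta> \<in> (\<Union>K. \<Theta> K) \<Longrightarrow> ell \<theta> \<in> borel_measurable \<mu>"
    and model_prob: "\<And>\<theta>. \<theta> \<in> (\<Union>K. \<Theta> K) \<Longrightarrow> prob_space (model \<mu> ell \<theta>)"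
    and A1_Theta: "\<And>K. compact (\<Theta> K)"
    and A1_Pi: "\<And>K. weakly_compact (model_class \<mu> ell (\<Theta> K))"
    and A2: "\<And>K z. continuous_on (\<Theta> K) (\<lambda>\<theta>. ell \<theta> z)"
    and A3_int: "integrable Pstar (\<lambda>z. u z - l z)"
    and A3_star: "\<And>z. l z \<le> ellstar z \<and> ellstar z \<le> u z"
    and A3_model: "\<And>\<theta> z. \<theta> \<in> (\<Union>K. \<Theta> K) \<Longrightarrow> l z \<le> ell \<theta> z \<and> ell \<theta> z \<le> u z"
    and Kstar_in: "Pstar \<in> model_class \<mu> ell (\<Theta> Ks)"
    and Kstar_notin: "Pstar \<notin> model_class \<mu> ell (\<Theta> (Ks - 1))"
    and entropy_fin: "\<And>\<theta>. \<theta> \<in> (\<Union>K. \<Theta> K) \<Longrightarrow> rel_entropy (model \<mu> ell \<theta>) Pstar < \<infinity>"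
    and plogp_int: "\<And>\<theta>. \<theta> \<in> (\<Union>K. \<Theta> K) \<Longrightarrow> integrable \<mu> (\<lambda>z. exp (ell \<theta> z) * ell \<theta> z)"
    and ell_orlicz: "\<And>\<theta>. \<theta> \<in> (\<Union>K. \<Theta> K) \<Longrightarrow> ell \<theta> \<in> orlicz Pstar"
    and strict_decr: "\<And>K. K \<ge> 1 \<Longrightarrow> Pstar \<notin> model_class \<mu> ell (\<Theta> K) \<Longrightarrow>
        rel_entropy_set Pstar (model_class \<mu> ell (\<Theta> (Suc K)))
          < rel_entropy_set Pstar (model_class \<mu> ell (\<Theta> K))"
  shows "\<forall>K. 1 \<le> K \<and> K < Ks \<longrightarrow>
           (\<forall>\<theta>\<in>\<Theta> K. int_fun (model \<mu> ell \<theta>)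
               \<in> Lambda_set Pstar \<Theta> ell 0 K \<inter> Gamma_set Pstar \<Theta> ell Ks 0 K) \<and>
           int_fun Pstar \<notin> Lambda_set Pstar \<Theta> ell 0 K \<union> Gamma_set Pstar \<Theta> ell Ks 0 K"
proof -
  let ?Th = "\<Union>K. \<Theta> K"
  have setsP: "sets Pstar = sets \<mu>" using Pstar_def by simp
  have mstar: "ellstar \<in> borel_measurable Pstar"
    using ellstar_meas by (simp add: measurable_cong_sets[OF setsP refl])
  have mell: "ell \<theta> \<in> borel_measurable Pstar" if "\<theta> \<in> ?Th" for \<theta>
    using ell_meas[OF that] by (simp add: measurable_cong_sets[OF setsP refl])
  define g where "g \<theta> z = exp (ell \<theta> z - ellstar z)" for \<theta> z
  have gm: "g \<theta> \<in> borel_measurable Pstar" if "\<theta> \<in> ?Th" for \<theta>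
    unfolding g_def using mell[OF that] mstar by measurable
  have gpos: "0 < g \<theta> z" for \<theta> z unfolding g_def by simp
  have modelP: "model \<mu> ell \<theta> = density Pstar (\<lambda>z. ennreal (g \<theta> z))" if "\<theta> \<in> ?Th" for \<theta>
  proof -
    have "density Pstar (\<lambda>z. ennreal (g \<theta> z))
        = density \<mu> (\<lambda>z. ennreal (exp (ellstar z)) * ennreal (g \<theta> z))"
      unfolding Pstar_def g_def
    proof (intro density_density_eq)
      note [measurable] = ellstar_meas ell_meas[OF that]
      show "(\<lambda>z. ennreal (exp (ellstar z))) \<in> borel_measurable \<mu>" by measurable
      show "(\<lambda>z. ennreal (exp (ell \<theta> z - ellstar z))) \<in> borel_measurable \<mu>" by measurable
    qed
    also have "\<dots> = model \<mu> ell \<theta>"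
      unfolding model_def g_def using ell_meas[OF that]
      by (intro density_cong) (auto simp: ennreal_mult[symmetric] mult_exp_exp)
    finally show ?thesis by simp
  qed
  have Eint: "integrable Pstar (\<lambda>z. g \<theta> z * max 0 (ln (g \<theta> z)))" if "\<theta> \<in> ?Th" for \<theta>
    using entropy_pos_integrable[OF Pstar_prob gm[OF that] gpos modelP[OF that]
        model_prob[OF that] entropy_fin[OF that]] .
  have intP: "integrable (model \<mu> ell \<theta>) f \<and> int_fun (model \<mu> ell \<theta>) f = (\<integral>z. g \<theta> z * f z \<partial>Pstar)"
    if th: "\<theta> \<in> ?Th" and f: "f \<in> orlicz Pstar" for \<theta> f
  proof -
    have fm: "f \<in> borel_measurable Pstar" using f unfolding orlicz_def by auto
    have "integrable Pstar (\<lambda>z. g \<theta> z * f z)"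
      using orlicz_dual_bound(1)[OF Pstar_prob gm[OF th] gpos Eint[OF th] f] .
    moreover have "integrable (model \<mu> ell \<theta>) f \<longleftrightarrow> integrable Pstar (\<lambda>z. g \<theta> z * f z)"
      unfolding modelP[OF th] using fm gm[OF th] gpos
      by (subst integrable_density) (auto simp: less_imp_le)
    moreover have "int_fun (model \<mu> ell \<theta>) f = (\<integral>z. g \<theta> z * f z \<partial>Pstar)"
      unfolding modelP[OF th] int_fun_def using fm gm[OF th] gpos
      by (subst integral_density) (auto simp: less_imp_le)
    ultimately show ?thesis by simp
  qed
  have gint: "integrable Pstar (g \<theta>) \<and> (\<integral>z. g \<theta> z \<partial>Pstar) = 1" if th: "\<theta> \<in> ?Th" for \<theta>
  proof -
    interpret Pt: prob_space "model \<mu> ell \<theta>" using model_prob[OF th] .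
    have "integrable (model \<mu> ell \<theta>) (\<lambda>_. 1::real)" by simp
    hence "integrable Pstar (\<lambda>z. g \<theta> z * 1)"
      unfolding modelP[OF th] using gm[OF th] gpos
      by (subst (asm) integrable_density) (auto simp: less_imp_le)
    moreover have "(\<integral>z. 1 \<partial>model \<mu> ell \<theta>) = (\<integral>z. g \<theta> z * 1 \<partial>Pstar)"
      unfolding modelP[OF th] using gm[OF th] gpos
      by (subst integral_density) (auto simp: less_imp_le)
    moreover have "(\<integral>z. 1 \<partial>model \<mu> ell \<theta>) = (1::real)" by (simp add: Pt.prob_space)
    ultimately show ?thesis by simp
  qed
  have Qin: "int_fun (model \<mu> ell \<theta>) \<in> Qset Pstar" if th: "\<theta> \<in> ?Th" for \<theta>
  proof -
    interpret Pt: prob_space "model \<mu> ell \<theta>" using model_prob[OF th] .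
    have lin: "int_fun (model \<mu> ell \<theta>) (\<lambda>z. a * f z + b * f' z)
        = a * int_fun (model \<mu> ell \<theta>) f + b * int_fun (model \<mu> ell \<theta>) f'"
      if "f \<in> orlicz Pstar" "f' \<in> orlicz Pstar" for f f' a b
      using intP[OF th that(1)] intP[OF th that(2)] unfolding int_fun_def by simp
    have bnd: "\<bar>int_fun (model \<mu> ell \<theta>) f\<bar>
        \<le> (4 + (\<integral>z. g \<theta> z * max 0 (ln (g \<theta> z)) \<partial>Pstar)) * orlicz_norm Pstar f"
      if "f \<in> orlicz Pstar" for f
      using intP[OF th that] orlicz_dual_bound(2)[OF Pstar_prob gm[OF th] gpos Eint[OF th] that] by simp
    have pos: "0 \<le> int_fun (model \<mu> ell \<theta>) f"
      if "f \<in> orlicz Pstar" "AE z in Pstar. 0 \<le> f z" for f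
    proof -
      have "0 \<le> (\<integral>z. g \<theta> z * f z \<partial>Pstar)"
        using that(2) gpos by (intro integral_nonneg_AE) (auto elim!: eventually_mono simp: less_imp_le)
      thus ?thesis using intP[OF th that(1)] by simp
    qed
    have one: "int_fun (model \<mu> ell \<theta>) (\<lambda>_. 1) = 1"
      unfolding int_fun_def by (simp add: Pt.prob_space)
    show ?thesis unfolding Qset_def orlicz_dual_def
      using lin bnd pos one by blast
  qed
  have gibbs: "int_fun (model \<mu> ell \<theta>) (ell \<theta>') \<le> int_fun (model \<mu> ell \<theta>) (ell \<theta>)"
    if th: "\<theta> \<in> ?Th" and th': "\<theta>' \<in> ?Th" for \<theta> \<theta>'
  proof -
    have i1: "integrable Pstar (\<lambda>z. g \<theta> z * ell \<theta>' z)"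
      using orlicz_dual_bound(1)[OF Pstar_prob gm[OF th] gpos Eint[OF th] ell_orlicz[OF th']] .
    have i2: "integrable Pstar (\<lambda>z. g \<theta> z * ell \<theta> z)"
      using orlicz_dual_bound(1)[OF Pstar_prob gm[OF th] gpos Eint[OF th] ell_orlicz[OF th]] .
    have pw: "g \<theta> z * ell \<theta>' z - g \<theta> z * ell \<theta> z \<le> g \<theta>' z - g \<theta> z" for z
    proof -
      have "ell \<theta>' z - ell \<theta> z \<le> exp (ell \<theta>' z - ell \<theta> z) - 1"
        using exp_ge_add_one_self[of "ell \<theta>' z - ell \<theta> z"] by linarith
      hence "g \<theta> z * (ell \<theta>' z - ell \<theta> z) \<le> g \<theta> z * (exp (ell \<theta>' z - ell \<theta> z) - 1)"
        using gpos[of \<theta> z] by (intro mult_left_mono) auto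
      also have "g \<theta> z * exp (ell \<theta>' z - ell \<theta> z) = g \<theta>' z"
        unfolding g_def by (simp add: mult_exp_exp)
      ultimately show ?thesis by (simp add: algebra_simps)
    qed
    have "(\<integral>z. g \<theta> z * ell \<theta>' z \<partial>Pstar) - (\<integral>z. g \<theta> z * ell \<theta> z \<partial>Pstar)
        = (\<integral>z. g \<theta> z * ell \<theta>' z - g \<theta> z * ell \<theta> z \<partial>Pstar)"
      using i1 i2 by simp
    also have "\<dots> \<le> (\<integral>z. g \<theta>' z - g \<theta> z \<partial>Pstar)"
      using i1 i2 gint[OF th] gint[OF th'] pw by (intro integral_mono) auto
    also have "\<dots> = 0" using gint[OF th] gint[OF th'] by simp
    finally show ?thesis
      using intP[OF th ell_orlicz[OF th']] intP[OF th ell_orlicz[OF th]] by simp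
  qed
  have sub: "\<Theta> a \<subseteq> \<Theta> b" if "a \<le> b" for a b
    using lift_Suc_mono_le[of \<Theta>, OF nested that] .
  have part1: "int_fun (model \<mu> ell \<theta>) \<in> Lambda_set Pstar \<Theta> ell 0 K \<inter> Gamma_set Pstar \<Theta> ell Ks 0 K"
    if th: "\<theta> \<in> \<Theta> K" for K \<theta>
  proof -
    have thT: "\<theta> \<in> ?Th" using th by auto
    have up: "ereal (int_fun (model \<mu> ell \<theta>) (ell \<theta>)) \<le> sup_ll (int_fun (model \<mu> ell \<theta>)) ell (\<Theta> K)"
      unfolding sup_ll_def using th by (rule SUP_upper2) simp
    have lo: "sup_ll (int_fun (model \<mu> ell \<theta>)) ell (\<Theta> J) \<le> ereal (int_fun (model \<mu> ell \<theta>) (ell \<theta>))" for J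
      unfolding sup_ll_def by (rule SUP_least) (use gibbs[OF thT] in auto)
    show ?thesis unfolding Lambda_set_def Gamma_set_def
      using Qin[OF thT] order_trans[OF lo up] by simp
  qed
  obtain \<theta>0 where th0: "\<theta>0 \<in> \<Theta> Ks" using Kstar_in unfolding model_class_def by auto
  have int1: "integrable Pstar (ell \<theta>)" if "\<theta> \<in> ?Th" for \<theta>
  proof -
    have "integrable Pstar (\<lambda>z. 1 * ell \<theta> z)"
      by (rule orlicz_dual_bound(1)[OF Pstar_prob _ _ _ ell_orlicz[OF that]]) auto
    thus ?thesis by simp
  qed
  have diffint: "integrable Pstar (\<lambda>z. ellstar z - ell \<theta> z)" if th: "\<theta> \<in> ?Th" for \<theta>
  proof (rule Bochner_Integration.integrable_bound[OF A3_int])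
    show "(\<lambda>z. ellstar z - ell \<theta> z) \<in> borel_measurable Pstar" using mstar mell[OF th] by (rule borel_measurable_diff)
    show "AE z in Pstar. norm (ellstar z - ell \<theta> z) \<le> norm (u z - l z)"
    proof (intro AE_I2)
      fix z
      have a: "l z \<le> ellstar z" "ellstar z \<le> u z" "l z \<le> ell \<theta> z" "ell \<theta> z \<le> u z"
        using A3_star[of z] A3_model[OF th, of z] by auto
      have "\<bar>ellstar z - ell \<theta> z\<bar> \<le> u z - l z" unfolding abs_le_iff using a by linarith
      also have "\<dots> \<le> \<bar>u z - l z\<bar>" by (rule abs_ge_self)
      finally show "norm (ellstar z - ell \<theta> z) \<le> norm (u z - l z)" by simp
    qed
  qed
  have starint: "integrable Pstar ellstar"
  proof -
    have "integrable Pstar (\<lambda>z. (ellstar z - ell \<theta>0 z) + ell \<theta>0 z)"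
    proof -
      have t: "\<theta>0 \<in> ?Th" using th0 by auto
      show ?thesis using Bochner_Integration.integrable_add[OF diffint[OF t] int1[OF t]] by simp
    qed
    thus ?thesis by simp
  qed
  define c where "c = (\<integral>z. ellstar z \<partial>Pstar)"
  have ent: "rel_entropy Pstar (model \<mu> ell \<theta>) = ereal c - ereal (int_fun Pstar (ell \<theta>))"
    if th: "\<theta> \<in> ?Th" for \<theta>
  proof -
    define h where "h z = exp (ellstar z - ell \<theta> z)" for z
    have hm: "h \<in> borel_measurable (model \<mu> ell \<theta>)"
      unfolding h_def model_def
    proof -
      note [measurable] = ellstar_meas ell_meas[OF th]
      show "(\<lambda>z. exp (ellstar z - ell \<theta> z)) \<in> borel_measurable (density \<mu> (\<lambda>z. ennreal (exp (ell \<theta> z))))"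
        by measurable
    qed
    have hpos: "0 < h z" for z unfolding h_def by simp
    have PD: "Pstar = density (model \<mu> ell \<theta>) (\<lambda>z. ennreal (h z))"
    proof -
      have "density (model \<mu> ell \<theta>) (\<lambda>z. ennreal (h z))
          = density \<mu> (\<lambda>z. ennreal (exp (ell \<theta> z)) * ennreal (h z))"
        unfolding model_def h_def
      proof (intro density_density_eq)
        note [measurable] = ellstar_meas ell_meas[OF th]
        show "(\<lambda>z. ennreal (exp (ell \<theta> z))) \<in> borel_measurable \<mu>" by measurable
        show "(\<lambda>z. ennreal (exp (ellstar z - ell \<theta> z))) \<in> borel_measurable \<mu>" by measurable
      qed
      also have "\<dots> = Pstar"
        unfolding Pstar_def h_def using ellstar_meas
        by (intro density_cong) (auto simp: ennreal_mult[symmetric] mult_exp_exp)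
      finally show ?thesis by simp
    qed
    have "integrable Pstar (\<lambda>z. ln (h z))" unfolding h_def using diffint[OF th] by simp
    hence "rel_entropy Pstar (model \<mu> ell \<theta>) = ereal (\<integral>z. ln (h z) \<partial>Pstar)"
      by (intro rel_entropy_density_int[OF hm hpos PD Pstar_prob])
    also have "(\<integral>z. ln (h z) \<partial>Pstar) = c - int_fun Pstar (ell \<theta>)"
      unfolding h_def c_def int_fun_def using starint int1[OF th] by simp
    finally show ?thesis by simp
  qed
  have entset: "rel_entropy_set Pstar (model_class \<mu> ell (\<Theta> K))
      = ereal c - sup_ll (int_fun Pstar) ell (\<Theta> K)" for K
  proof -
    have "rel_entropy_set Pstar (model_class \<mu> ell (\<Theta> K))
        = (INF \<theta>\<in>\<Theta> K. ereal c - ereal (int_fun Pstar (ell \<theta>)))"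
      unfolding rel_entropy_set_def model_class_def image_image
      by (intro INF_cong refl) (rule ent, blast)
    also have "\<dots> = ereal c - sup_ll (int_fun Pstar) ell (\<Theta> K)"
    proof (cases "\<Theta> K = {}")
      case True thus ?thesis unfolding sup_ll_def by (simp add: bot_ereal_def top_ereal_def)
    next
      case False thus ?thesis unfolding sup_ll_def by (intro INF_ereal_minus_right) auto
    qed
    finally show ?thesis .
  qed
  have part2: "int_fun Pstar \<notin> Lambda_set Pstar \<Theta> ell 0 K \<union> Gamma_set Pstar \<Theta> ell Ks 0 K"
    if K: "1 \<le> K" "K < Ks" for K
  proof -
    have "Pstar \<notin> model_class \<mu> ell (\<Theta> K)"
    proof -
      have "\<Theta> K \<subseteq> \<Theta> (Ks - 1)" using sub[of K "Ks - 1"] K by simp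
      thus ?thesis using Kstar_notin unfolding model_class_def by blast
    qed
    hence "ereal c - sup_ll (int_fun Pstar) ell (\<Theta> (Suc K)) < ereal c - sup_ll (int_fun Pstar) ell (\<Theta> K)"
      using strict_decr[OF K(1)] by (simp add: entset)
    hence lt: "sup_ll (int_fun Pstar) ell (\<Theta> K) < sup_ll (int_fun Pstar) ell (\<Theta> (Suc K))"
      by (cases "sup_ll (int_fun Pstar) ell (\<Theta> K)"; cases "sup_ll (int_fun Pstar) ell (\<Theta> (Suc K))") auto
    have "sup_ll (int_fun Pstar) ell (\<Theta> (Suc K)) \<le> sup_ll (int_fun Pstar) ell (\<Theta> Ks)"
      unfolding sup_ll_def using sub[of "Suc K" Ks] K by (intro SUP_subset_mono) auto
    thus ?thesis using lt unfolding Lambda_set_def Gamma_set_def by auto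
  qed
  show ?thesis using part1 part2 by blast
qed

end
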